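(* Let $a,b,c\in\mathbb{Z}_8$. The unary operation $f(x)=ax^3+bx^2+cx$ on $\mathbb{Z}_8$ preserves the relation $Z$ if and only if both $a$ and $b$ are even.
   Context: $P_4$ is the power set of $\{1,2,3,4\}$. For $A\in P_4$, $\mathbf{g}^A\in\mathbb{Z}_8^{P_4}$ is the tuple with $B$-component $1$ if $A\subseteq B$ and $0$ otherwise. Every $\mathbf{u}\in\mathbb{Z}_8^{P_4}$ has a unique expression $\mathbf{u}=\sum_{A\in P_4}a_A\mathbf{g}^A$ with $a_A\in\mathbb{Z}_8$. $Z\subseteq \mathbb{Z}_8^{P_4}$ consists of all $\mathbf{u}$ whose coefficients satisfy: (Z1) $a_{\{2\}}\equiv 2a_{\{1\}}\pmod 4$ and $a_{\{4\}}\equiv 2a_{\{3\}}\pmod 4$; (Z2) $a_A\equiv 0\pmod 2$ whenever $|A|\ge 2$; (Z3) $a_A\equiv 0\pmod 4$ whenever $|A|\ge 2$ and $A\cap\{2,4\}\neq\emptyset$; (Z4) $a_A=0$ whenever $\{2,4\}\subseteq A$. An operation preserves $Z$ if applying it componentwise to elements of $Z$ yields an element of $Z$. *)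

theory Defs
  imports Main "HOL-Library.Numeral_Type" "HOL-Number_Theory.Cong"
begin

text \<open>Z_8 is the numeral type 8 (integers modulo 8, a commutative ring).
  zrep x is the canonical representative of x in {0..7}.\<close>

definition zrep :: "8 \<Rightarrow> int" where
  "zrep x = Rep_bit0 x"

definition P4 :: "nat set set" where
  "P4 = Pow {1,2,3,4}"

text \<open>Tuples in Z_8^{P_4} are functions nat set => 8 that vanish outside P_4.
  g A is the tuple with B-component 1 iff A is a subset of B.\<close>
definition g :: "nat set \<Rightarrow> nat set \<Rightarrow> 8" where
  "g A = (\<lambda>B. if B \<in> P4 \<and> A \<subseteq> B then 1 else 0)"

definition lincomb :: "(nat set \<Rightarrow> 8) \<Rightarrow> nat set \<Rightarrow> 8" where
  "lincomb a = (\<lambda>B. \<Sum>A\<in>P4. a A * g A B)"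

definition coeff_ok :: "(nat set \<Rightarrow> 8) \<Rightarrow> bool" where
  "coeff_ok a \<longleftrightarrow>
     [zrep (a {2}) = 2 * zrep (a {1})] (mod 4) \<and>
     [zrep (a {4}) = 2 * zrep (a {3})] (mod 4) \<and>
     (\<forall>A\<in>P4. card A \<ge> 2 \<longrightarrow> [zrep (a A) = 0] (mod 2)) \<and>
     (\<forall>A\<in>P4. card A \<ge> 2 \<and> A \<inter> {2,4} \<noteq> {} \<longrightarrow> [zrep (a A) = 0] (mod 4)) \<and>
     (\<forall>A\<in>P4. {2,4} \<subseteq> A \<longrightarrow> a A = 0)"

text \<open>Z: tuples whose (unique) coefficient expression satisfies Z1-Z4.\<close>
definition Z :: "(nat set \<Rightarrow> 8) set" where
  "Z = {u. \<exists>a. u = lincomb a \<and> coeff_ok a}"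

definition apply1 :: "(8 \<Rightarrow> 8) \<Rightarrow> (nat set \<Rightarrow> 8) \<Rightarrow> nat set \<Rightarrow> 8" where
  "apply1 f u = (\<lambda>B. if B \<in> P4 then f (u B) else 0)"

definition preserves_Z :: "(8 \<Rightarrow> 8) \<Rightarrow> bool" where
  "preserves_Z f \<longleftrightarrow> (\<forall>u\<in>Z. apply1 f u \<in> Z)"

end

theory Submission
  imports Defs
begin
lemma ex8: "(x::8) = 0 \<or> x = 1 \<or> x = 2 \<or> x = 3 \<or> x = 4 \<or> x = 5 \<or> x = 6 \<or> x = 7"
proof (cases x)
  case (of_int z)
  then have "z = 0 \<or> z = 1 \<or> z = 2 \<or> z = 3 \<or> z = 4 \<or> z = 5 \<or> z = 6 \<or> z = 7" using of_int(3) by simp presburger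
  then show ?thesis using of_int by auto
qed
lemma "zrep 7 = 7" by (simp add: zrep_def bit0.Rep_numeral)
lemma "zrep 0 = 0" "zrep 1 = 1" by (simp_all add: zrep_def bit0.Rep_0 bit0.Rep_1)
lemmas zsimps = zrep_def bit0.Rep_numeral bit0.Rep_0 bit0.Rep_1 cong_def
lemma dvd8: "(d::8) dvd y \<longleftrightarrow> y = d*0 \<or> y = d*1 \<or> y = d*2 \<or> y = d*3 \<or> y = d*4 \<or> y = d*5 \<or> y = d*6 \<or> y = d*7"
  unfolding dvd_def using ex8 by metis
lemma d2: "[zrep x = 0] (mod 2) \<longleftrightarrow> (2::8) dvd x"
  using ex8[of x] apply (elim disjE)
  by (simp_all add: zsimps dvd8)
lemma d4: "[zrep x = 0] (mod 4) \<longleftrightarrow> (4::8) dvd x"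
  using ex8[of x] apply (elim disjE)
  by (simp_all add: zsimps dvd8)
lemma d42: "[zrep y = 2 * zrep x] (mod 4) \<longleftrightarrow> (4::8) dvd (y - 2*x)"
  using ex8[of x] ex8[of y] apply (elim disjE)
  by (simp_all add: zsimps dvd8)
lemma ev: "even (zrep x) \<longleftrightarrow> (2::8) dvd x"
  using ex8[of x] apply (elim disjE)
  by (simp_all add: zsimps dvd8)
lemma h1: "(4::8) dvd 2*x \<Longrightarrow> 2 dvd x"
  using ex8[of x] apply (elim disjE)
  by (simp_all add: zsimps dvd8)

definition ok :: "(nat set \<Rightarrow> 8) \<Rightarrow> bool" where
  "ok a \<longleftrightarrow> 4 dvd (a {2} - 2 * a {1}) \<and> 4 dvd (a {4} - 2 * a {3}) \<and>
     (\<forall>A\<in>P4. card A \<ge> 2 \<longrightarrow> 2 dvd a A) \<and>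
     (\<forall>A\<in>P4. card A \<ge> 2 \<and> A \<inter> {2,4} \<noteq> {} \<longrightarrow> 4 dvd a A) \<and>
     (\<forall>A\<in>P4. {2,4} \<subseteq> A \<longrightarrow> a A = 0)"

lemma ok_iff: "coeff_ok a \<longleftrightarrow> ok a"
  unfolding coeff_ok_def ok_def d2 d4 d42 by simp

lemma finP4: "finite P4" by (simp add: P4_def)

lemma lincomb_alt: "B \<in> P4 \<Longrightarrow> lincomb a B = (\<Sum>A\<in>Pow B. a A)"
proof -
  assume B: "B \<in> P4"
  have "lincomb a B = (\<Sum>A\<in>P4. if A \<subseteq> B then a A else 0)"
    unfolding lincomb_def g_def using B by (intro sum.cong) auto
  also have "\<dots> = (\<Sum>A\<in>{A\<in>P4. A \<subseteq> B}. a A)"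
    by (simp add: sum.inter_filter finP4)
  also have "{A\<in>P4. A \<subseteq> B} = Pow B" using B by (auto simp: P4_def)
  finally show ?thesis .
qed

lemma lincomb_out: "B \<notin> P4 \<Longrightarrow> lincomb a B = 0"
  unfolding lincomb_def g_def by simp

definition conv :: "(nat set \<Rightarrow> 8) \<Rightarrow> (nat set \<Rightarrow> 8) \<Rightarrow> nat set \<Rightarrow> 8" where
  "conv a b D = (\<Sum>A\<in>P4. \<Sum>A'\<in>P4. if A \<union> A' = D then a A * b A' else 0)"

lemma lincomb_mult: "B \<in> P4 \<Longrightarrow> lincomb a B * lincomb b B = lincomb (conv a b) B"
proof -
  assume B: "B \<in> P4"
  have PB: "Pow B \<subseteq> P4" using B by (auto simp: P4_def)
  have fB: "finite (Pow B)" using B by (auto simp: P4_def intro: finite_subset)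
  have "lincomb (conv a b) B = (\<Sum>D\<in>Pow B. \<Sum>A\<in>P4. \<Sum>A'\<in>P4. if A \<union> A' = D then a A * b A' else 0)"
    using B by (simp add: lincomb_alt conv_def)
  also have "\<dots> = (\<Sum>A\<in>P4. \<Sum>A'\<in>P4. \<Sum>D\<in>Pow B. if A \<union> A' = D then a A * b A' else 0)"
    by (subst sum.swap) (simp add: sum.swap[of _ "Pow B"])
  also have "\<dots> = (\<Sum>A\<in>P4. \<Sum>A'\<in>P4. if A \<subseteq> B then (if A' \<subseteq> B then a A * b A' else 0) else 0)"
    using fB by (intro sum.cong refl) (auto simp: sum.delta)
  also have "\<dots> = (\<Sum>A\<in>P4. if A \<subseteq> B then (\<Sum>A'\<in>P4. if A' \<subseteq> B then a A * b A' else 0) else 0)"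
    by (intro sum.cong refl) auto
  also have "\<dots> = (\<Sum>A\<in>{A\<in>P4. A \<subseteq> B}. \<Sum>A'\<in>{A\<in>P4. A \<subseteq> B}. a A * b A')"
    by (simp add: sum.inter_filter finP4)
  also have "{A\<in>P4. A \<subseteq> B} = Pow B" using B by (auto simp: P4_def)
  also have "(\<Sum>A\<in>Pow B. \<Sum>A'\<in>Pow B. a A * b A') = lincomb a B * lincomb b B"
    using B by (simp add: lincomb_alt sum_product)
  finally show ?thesis by simp
qed

lemma lincomb_add: "lincomb (\<lambda>A. a A + b A) B = lincomb a B + lincomb b B"
  unfolding lincomb_def by (simp add: sum.distrib distrib_right)

lemma lincomb_smult: "lincomb (\<lambda>A. k * a A) B = k * lincomb a B"
  unfolding lincomb_def by (simp add: sum_distrib_left mult.assoc)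

lemma ok_add: "ok a \<Longrightarrow> ok b \<Longrightarrow> ok (\<lambda>A. a A + b A)"
proof -
  assume a: "ok a" and b: "ok b"
  have e1: "a {2} + b {2} - 2 * (a {1} + b {1}) = (a {2} - 2 * a {1}) + (b {2} - 2 * b {1})" by (simp add: algebra_simps)
  have e2: "a {4} + b {4} - 2 * (a {3} + b {3}) = (a {4} - 2 * a {3}) + (b {4} - 2 * b {3})" by (simp add: algebra_simps)
  show ?thesis using a b unfolding ok_def e1 e2 by (auto intro: dvd_add)
qed

lemma ok_smult: "ok a \<Longrightarrow> ok (\<lambda>A. k * a A)"
proof -
  assume a: "ok a"
  have e1: "k * a {2} - 2 * (k * a {1}) = k * (a {2} - 2 * a {1})" by (simp add: algebra_simps)
  have e2: "k * a {4} - 2 * (k * a {3}) = k * (a {4} - 2 * a {3})" by (simp add: algebra_simps)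
  show ?thesis using a unfolding ok_def e1 e2 by (auto intro: dvd_mult)
qed

lemma card_le1: "finite A \<Longrightarrow> \<not> 2 \<le> card A \<Longrightarrow> x \<in> A \<Longrightarrow> A = {x}"
proof -
  assume a: "finite A" "\<not> 2 \<le> card A" "x \<in> A"
  then have "card A > 0" using card_gt_0_iff by blast
  then have "card A = 1" using a(2) by simp
  then obtain y where "A = {y}" by (rule card_1_singletonE)
  then show ?thesis using a(3) by simp
qed

lemma d24: "(2::8) dvd 4" by (rule dvdI[of _ _ 2]) simp

lemma E1: "ok a \<Longrightarrow> A \<in> P4 \<Longrightarrow> A \<inter> {2,4} \<noteq> {} \<Longrightarrow> 2 dvd a A"
proof -
  assume a: "ok a" and A: "A \<in> P4" "A \<inter> {2,4} \<noteq> {}"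
  have fA: "finite A" using A by (auto simp: P4_def intro: finite_subset)
  show ?thesis
  proof (cases "2 \<le> card A")
    case True
    then have "4 dvd a A" using a A unfolding ok_def by blast
    then show ?thesis by (rule dvd_trans[rotated]) (rule d24)
  next
    case False
    obtain x where x: "x \<in> A" "x = 2 \<or> x = 4" using A(2) by blast
    have "A = {x}" using card_le1[OF fA False x(1)] .
    then have "A = {2} \<or> A = {4}" using x(2) by simp
    moreover have "2 dvd a {2}"
    proof -
      have "(4::8) dvd (a {2} - 2 * a {1})" using a unfolding ok_def by blast
      then have "(2::8) dvd (a {2} - 2 * a {1})" by (rule dvd_trans[rotated]) (rule d24)
      then have "(2::8) dvd (a {2} - 2 * a {1}) + 2 * a {1}" by (intro dvd_add) auto
      then show ?thesis by simp
    qed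
    moreover have "2 dvd a {4}"
    proof -
      have "(4::8) dvd (a {4} - 2 * a {3})" using a unfolding ok_def by blast
      then have "(2::8) dvd (a {4} - 2 * a {3})" by (rule dvd_trans[rotated]) (rule d24)
      then have "(2::8) dvd (a {4} - 2 * a {3}) + 2 * a {3}" by (intro dvd_add) auto
      then show ?thesis by simp
    qed
    ultimately show ?thesis by (elim disjE) simp_all
  qed
qed

lemma eight: "(8::8) = 0" by simp

lemma m4: "(2::8) dvd y \<Longrightarrow> (4::8) dvd 2 * y"
proof -
  assume "2 dvd y"
  then obtain k where "y = 2 * k" by blast
  then show ?thesis by (intro dvdI[of _ _ k]) simp
qed

lemma E2: "ok a \<Longrightarrow> \<forall>A\<in>P4. 2 dvd a A \<Longrightarrow> A \<in> P4 \<Longrightarrow> A \<inter> {2,4} \<noteq> {} \<Longrightarrow> 4 dvd a A"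
proof -
  assume a: "ok a" and ev: "\<forall>A\<in>P4. 2 dvd a A" and A: "A \<in> P4" "A \<inter> {2,4} \<noteq> {}"
  have fA: "finite A" using A by (auto simp: P4_def intro: finite_subset)
  have P1: "{1} \<in> P4" "{3} \<in> P4" by (auto simp: P4_def)
  show ?thesis
  proof (cases "2 \<le> card A")
    case True
    then show ?thesis using a A unfolding ok_def by blast
  next
    case False
    obtain x where x: "x \<in> A" "x = 2 \<or> x = 4" using A(2) by blast
    have "A = {x}" using card_le1[OF fA False x(1)] .
    then have "A = {2} \<or> A = {4}" using x(2) by simp
    moreover have "4 dvd a {2}"
    proof -
      have "(4::8) dvd (a {2} - 2 * a {1})" using a unfolding ok_def by blast
      moreover have "(4::8) dvd 2 * a {1}" using ev P1 m4 by blast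
      ultimately have "(4::8) dvd (a {2} - 2 * a {1}) + 2 * a {1}" by (intro dvd_add)
      then show ?thesis by simp
    qed
    moreover have "4 dvd a {4}"
    proof -
      have "(4::8) dvd (a {4} - 2 * a {3})" using a unfolding ok_def by blast
      moreover have "(4::8) dvd 2 * a {3}" using ev P1 m4 by blast
      ultimately have "(4::8) dvd (a {4} - 2 * a {3}) + 2 * a {3}" by (intro dvd_add)
      then show ?thesis by simp
    qed
    ultimately show ?thesis by (elim disjE) simp_all
  qed
qed

lemma E3: "ok a \<Longrightarrow> A \<in> P4 \<Longrightarrow> {2,4} \<subseteq> A \<Longrightarrow> a A = 0"
  unfolding ok_def by blast

lemma conv_dvd:
  assumes "\<And>A A'. A \<in> P4 \<Longrightarrow> A' \<in> P4 \<Longrightarrow> A \<union> A' = D \<Longrightarrow> d dvd a A * b A'"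
  shows "d dvd conv a b D"
  unfolding conv_def using assms by (auto intro!: dvd_sum)

lemma conv_zero2:
  assumes "\<And>A A'. A \<in> P4 \<Longrightarrow> A' \<in> P4 \<Longrightarrow> A \<union> A' = D \<Longrightarrow> k * (a A * b A') = 0"
  shows "k * conv a b D = 0"
  unfolding conv_def sum_distrib_left using assms by (auto intro!: sum.neutral)

lemma m8: "(2::8) dvd x \<Longrightarrow> 2 dvd y \<Longrightarrow> 2 * (x * y) = 0"
proof -
  assume "2 dvd x" "2 dvd y"
  then obtain k l where "x = 2 * k" "y = 2 * l" by blast
  then have "2 * (x * y) = 8 * (k * l)" by (simp add: algebra_simps)
  then show ?thesis by (simp add: eight)
qed

lemma m8': "(4::8) dvd x \<Longrightarrow> 2 dvd y \<Longrightarrow> x * y = 0"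
proof -
  assume "4 dvd x" "2 dvd y"
  then obtain k l where "x = 4 * k" "y = 2 * l" by blast
  then have "x * y = 8 * (k * l)" by (simp add: algebra_simps)
  then show ?thesis by (simp add: eight)
qed

lemma P1:
  assumes a: "ok a" and b: "ok b"
  shows "ok (\<lambda>D. 2 * conv a b D)"
proof -
  have T1: "2 dvd conv a b D" if D: "D \<inter> {2,4} \<noteq> {}" for D
  proof (rule conv_dvd)
    fix A A' assume AA: "A \<in> P4" "A' \<in> P4" "A \<union> A' = D"
    then have "A \<inter> {2,4} \<noteq> {} \<or> A' \<inter> {2,4} \<noteq> {}" using D by blast
    then show "2 dvd a A * b A'" using E1[OF a AA(1)] E1[OF b AA(2)] by auto
  qed
  have T2: "2 * conv a b D = 0" if D: "{2,4} \<subseteq> D" for D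
  proof (rule conv_zero2)
    fix A A' assume AA: "A \<in> P4" "A' \<in> P4" "A \<union> A' = D"
    show "2 * (a A * b A') = 0"
    proof (cases "{2,4} \<subseteq> A \<or> {2,4} \<subseteq> A'")
      case True
      then show ?thesis using E3[OF a AA(1)] E3[OF b AA(2)] by auto
    next
      case False
      then have "A \<inter> {2,4} \<noteq> {}" "A' \<inter> {2,4} \<noteq> {}" using D AA(3) by blast+
      then show ?thesis using E1[OF a AA(1)] E1[OF b AA(2)] m8 by blast
    qed
  qed
  have d4: "(4::8) dvd 2 * (2 * y)" for y by (intro dvdI[of _ _ y]) simp
  show ?thesis unfolding ok_def
  proof (intro conjI ballI impI)
    show "4 dvd 2 * conv a b {2} - 2 * (2 * conv a b {1})"
      using m4[OF T1[of "{2}"]] d4 by (intro dvd_diff) auto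
    show "4 dvd 2 * conv a b {4} - 2 * (2 * conv a b {3})"
      using m4[OF T1[of "{4}"]] d4 by (intro dvd_diff) auto
  next
    fix A assume "A \<in> P4" "2 \<le> card A"
    show "2 dvd 2 * conv a b A" by simp
  next
    fix A assume "A \<in> P4" "2 \<le> card A \<and> A \<inter> {2,4} \<noteq> {}"
    then show "4 dvd 2 * conv a b A" using m4[OF T1] by blast
  next
    fix A assume "A \<in> P4" "{2,4} \<subseteq> A"
    then show "2 * conv a b A = 0" using T2 by blast
  qed
qed

lemma P2:
  assumes x: "ok x" and ev: "\<forall>A\<in>P4. 2 dvd x A" and w: "ok w"
  shows "ok (conv x w)"
proof -
  have T0: "2 dvd conv x w D" for D
  proof (rule conv_dvd)
    fix A A' assume AA: "A \<in> P4" "A' \<in> P4" "A \<union> A' = D"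
    then show "2 dvd x A * w A'" using ev by auto
  qed
  have T1: "4 dvd conv x w D" if D: "D \<inter> {2,4} \<noteq> {}" for D
  proof (rule conv_dvd)
    fix A A' assume AA: "A \<in> P4" "A' \<in> P4" "A \<union> A' = D"
    then have "A \<inter> {2,4} \<noteq> {} \<or> A' \<inter> {2,4} \<noteq> {}" using D by blast
    then show "4 dvd x A * w A'"
    proof
      assume "A \<inter> {2,4} \<noteq> {}"
      then show ?thesis using E2[OF x ev AA(1)] by auto
    next
      assume "A' \<inter> {2,4} \<noteq> {}"
      then have "2 dvd w A'" using E1[OF w AA(2)] by auto
      moreover have "2 dvd x A" using ev AA(1) by auto
      ultimately obtain k l where "w A' = 2 * k" "x A = 2 * l" by blast
      then show ?thesis by (intro dvdI[of _ _ "k * l"]) (simp add: algebra_simps)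
    qed
  qed
  have T2: "conv x w D = 0" if D: "{2,4} \<subseteq> D" for D
  proof -
    have "1 * conv x w D = 0"
    proof (rule conv_zero2)
      fix A A' assume AA: "A \<in> P4" "A' \<in> P4" "A \<union> A' = D"
      show "1 * (x A * w A') = 0"
      proof (cases "{2,4} \<subseteq> A \<or> {2,4} \<subseteq> A'")
        case True
        then show ?thesis using E3[OF x AA(1)] E3[OF w AA(2)] by auto
      next
        case False
        then have "A \<inter> {2,4} \<noteq> {}" "A' \<inter> {2,4} \<noteq> {}" using D AA(3) by blast+
        then show ?thesis using E2[OF x ev AA(1)] E1[OF w AA(2)] m8' by simp
      qed
    qed
    then show ?thesis by simp
  qed
  show ?thesis unfolding ok_def
  proof (intro conjI ballI impI)
    show "4 dvd conv x w {2} - 2 * conv x w {1}"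
      using T1[of "{2}"] m4[OF T0[of "{1}"]] by (intro dvd_diff) auto
    show "4 dvd conv x w {4} - 2 * conv x w {3}"
      using T1[of "{4}"] m4[OF T0[of "{3}"]] by (intro dvd_diff) auto
  next
    fix A assume "A \<in> P4" "2 \<le> card A"
    show "2 dvd conv x w A" by (rule T0)
  next
    fix A assume "A \<in> P4" "2 \<le> card A \<and> A \<inter> {2,4} \<noteq> {}"
    then show "4 dvd conv x w A" using T1 by blast
  next
    fix A assume "A \<in> P4" "{2,4} \<subseteq> A"
    then show "conv x w A = 0" using T2 by blast
  qed
qed

lemma suff:
  assumes ha: "2 dvd a" and hb: "2 dvd b"
  shows "preserves_Z (\<lambda>x. a * x ^ 3 + b * x ^ 2 + c * x)"
  unfolding preserves_Z_def
proof
  fix u assume "u \<in> Z"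
  then obtain p where u: "u = lincomb p" and p: "ok p" unfolding Z_def ok_iff by blast
  obtain a' b' where a': "a = 2 * a'" and b': "b = 2 * b'" using ha hb by blast
  define q2 where "q2 = (\<lambda>D. 2 * conv p p D)"
  define q3 where "q3 = conv q2 p"
  define r1 where "r1 = (\<lambda>A. a' * q3 A)"
  define r2 where "r2 = (\<lambda>A. b' * q2 A)"
  define r3 where "r3 = (\<lambda>A. c * p A)"
  define r12 where "r12 = (\<lambda>A. r1 A + r2 A)"
  define r where "r = (\<lambda>A. r12 A + r3 A)"
  have okq2: "ok q2" unfolding q2_def by (rule P1[OF p p])
  have evq2: "\<forall>A\<in>P4. 2 dvd q2 A" unfolding q2_def by simp
  have okq3: "ok q3" unfolding q3_def by (rule P2[OF okq2 evq2 p])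
  have okr: "ok r" unfolding r_def r12_def r1_def r2_def r3_def
    by (intro ok_add ok_smult okq2 okq3 p)
  have "apply1 (\<lambda>x. a * x ^ 3 + b * x ^ 2 + c * x) u = lincomb r"
  proof
    fix B
    show "apply1 (\<lambda>x. a * x ^ 3 + b * x ^ 2 + c * x) u B = lincomb r B"
    proof (cases "B \<in> P4")
      case False
      then show ?thesis by (simp add: apply1_def lincomb_out)
    next
      case True
      define x where "x = lincomb p B"
      have l2: "lincomb q2 B = 2 * (x * x)"
        unfolding q2_def lincomb_smult x_def lincomb_mult[OF True] ..
      have l3: "lincomb q3 B = 2 * (x * x) * x"
        unfolding q3_def lincomb_mult[OF True, symmetric] l2 x_def ..
      have "lincomb r B = a' * lincomb q3 B + b' * lincomb q2 B + c * x"
        unfolding r_def r12_def r1_def r2_def r3_def lincomb_add lincomb_smult x_def ..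
      also have "\<dots> = a * x ^ 3 + b * x ^ 2 + c * x"
        unfolding l2 l3 a' b' by (simp add: power3_eq_cube power2_eq_square algebra_simps)
      finally show ?thesis using True by (simp add: apply1_def u x_def)
    qed
  qed
  then show "apply1 (\<lambda>x. a * x ^ 3 + b * x ^ 2 + c * x) u \<in> Z"
    unfolding Z_def ok_iff using okr by blast
qed

definition p0 :: "nat set \<Rightarrow> 8" where
  "p0 A = (if A = {1} then 1 else if A = {2} then 2 else 0)"

lemma ok_p0: "ok p0"
  unfolding ok_def p0_def by auto

lemma fin_ab: "(4::8) dvd 6 * a + 2 * b \<Longrightarrow> 4 dvd 18 * a + 4 * b \<Longrightarrow> 2 dvd a \<and> 2 dvd b"
  using ex8[of a] ex8[of b] apply (elim disjE)
  by (simp_all add: dvd8)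

lemma nec:
  assumes "preserves_Z (\<lambda>x. a * x ^ 3 + b * x ^ 2 + c * x)"
  shows "2 dvd a \<and> 2 dvd b"
proof -
  let ?f = "\<lambda>x. a * x ^ 3 + b * x ^ 2 + c * x"
  have "lincomb p0 \<in> Z" unfolding Z_def ok_iff using ok_p0 by blast
  then have "apply1 ?f (lincomb p0) \<in> Z" using assms unfolding preserves_Z_def by blast
  then obtain r where r: "apply1 ?f (lincomb p0) = lincomb r" and okr: "ok r"
    unfolding Z_def ok_iff by blast
  have P: "{} \<in> P4" "{1} \<in> P4" "{2} \<in> P4" "{1,2} \<in> P4" by (auto simp: P4_def)
  have v0: "lincomb p0 {} = 0" "lincomb r {} = r {}"
    using P by (simp_all add: lincomb_alt p0_def)
  have v1: "lincomb p0 {1} = 1" "lincomb r {1} = r {} + r {1}"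
    using P by (simp_all add: lincomb_alt p0_def Pow_insert)
  have v2: "lincomb p0 {2} = 2" "lincomb r {2} = r {} + r {2}"
    using P by (simp_all add: lincomb_alt p0_def Pow_insert)
  have v3: "lincomb p0 {1,2} = 3" "lincomb r {1,2} = r {} + r {1} + r {2} + r {1,2}"
    using P by (simp_all add: lincomb_alt p0_def Pow_insert)
  have f0: "r {} = 0" using fun_cong[OF r, of "{}"] P v0 by (simp add: apply1_def)
  have f1: "r {1} = a + b + c" using fun_cong[OF r, of "{1}"] P v1 f0 by (simp add: apply1_def)
  have f2: "r {2} = a * 2 ^ 3 + b * 2 ^ 2 + c * 2" using fun_cong[OF r, of "{2}"] P v2 f0 by (simp add: apply1_def)
  have f3: "r {1,2} = (a * 3 ^ 3 + b * 3 ^ 2 + c * 3) - r {1} - r {2}"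
    using fun_cong[OF r, of "{1,2}"] P v3 f0 by (simp add: apply1_def algebra_simps)
  have d1: "4 dvd r {2} - 2 * r {1}" using okr unfolding ok_def by blast
  have "card {1::nat,2} = 2" by simp
  then have d2: "4 dvd r {1,2}" using okr P(4) unfolding ok_def by auto
  have "r {2} - 2 * r {1} = 6 * a + 2 * b" unfolding f1 f2 by (simp add: algebra_simps)
  moreover have "r {1,2} = 18 * a + 4 * b" unfolding f3 f1 f2 by (simp add: algebra_simps)
  ultimately have "4 dvd 6 * a + 2 * b" "4 dvd 18 * a + 4 * b" using d1 d2 by simp_all
  then show ?thesis by (rule fin_ab)
qed

theorem lemma3p7:
  fixes a b c :: 8
  shows "preserves_Z (\<lambda>x. a * x ^ 3 + b * x ^ 2 + c * x) \<longleftrightarrow>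
         even (zrep a) \<and> even (zrep b)"
proof
  assume "preserves_Z (\<lambda>x. a * x ^ 3 + b * x ^ 2 + c * x)"
  then show "even (zrep a) \<and> even (zrep b)" unfolding ev by (rule nec)
next
  assume "even (zrep a) \<and> even (zrep b)"
  then show "preserves_Z (\<lambda>x. a * x ^ 3 + b * x ^ 2 + c * x)" unfolding ev by (intro suff) auto
qed
end
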